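(* Let $(\alpha,\beta,\gamma,\delta)\in\mathbb{C}^4$ with $\gamma\neq0$ or $\delta\neq0$. The quartic surface $\mathrm{Q}(\alpha,\beta,\gamma,\delta)\subset\mathbb{P}^3(x,y,z,w)$, $y^2zw-4x^3z+3\alpha xzw^2+\beta zw^3+\gamma xz^2w-\tfrac12(\delta z^2w^2+w^4)=0$, has a singular point other than $[0,1,0,0]$ and $[0,0,1,0]$ if and only if $\mathcal{D}_4(\alpha,\beta,\gamma,\delta)=0$, where $$\begin{aligned}\mathcal{D}_4=\;&-2^53^6\alpha^6\beta\gamma^3+2^63^6\alpha^3\beta^3\gamma^3-2^53^6\beta^5\gamma^3-2^43^5\alpha^5\gamma^4+2^43^55^2\alpha^2\beta^2\gamma^4+2\cdot3^35^4\alpha\beta\gamma^5+5^5\gamma^6\\&-2^43^7\alpha^7\gamma^2\delta+2^53^7\alpha^4\beta^2\gamma^2\delta-2^43^7\alpha\beta^4\gamma^2\delta+2^33^5\cdot5\cdot19\,\alpha^3\beta\gamma^3\delta+2^33^55^2\beta^3\gamma^3\delta+3^35^3\cdot11\,\alpha^2\gamma^4\delta\\&+2^33^5\cdot37\,\alpha^4\gamma^2\delta^2+2^33^5\cdot5\cdot7\,\alpha\beta^2\gamma^2\delta^2-2^33^35^3\beta\gamma^3\delta^2+2^43^6\alpha^6\delta^3-2^53^6\alpha^3\beta^2\delta^3+2^43^6\beta^4\delta^3\\&-2^63^6\alpha^2\beta\gamma\delta^3-2^33^55^2\alpha\gamma^2\delta^3-2^53^6\alpha^3\delta^4-2^53^6\beta^2\delta^4+2^43^6\delta^5.\end{aligned}$$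 *)

theory Defs
  imports "HOL-Analysis.Analysis"
begin

definition Qform :: "complex \<Rightarrow> complex \<Rightarrow> complex \<Rightarrow> complex \<Rightarrow>
    complex \<Rightarrow> complex \<Rightarrow> complex \<Rightarrow> complex \<Rightarrow> complex" where
  "Qform a b c d x y z w =
     y^2*z*w - 4*x^3*z + 3*a*x*z*w^2 + b*z*w^3 + c*x*z^2*w - (d*z^2*w^2 + w^4)/2"

definition singular_point :: "complex \<Rightarrow> complex \<Rightarrow> complex \<Rightarrow> complex \<Rightarrow>
    complex \<Rightarrow> complex \<Rightarrow> complex \<Rightarrow> complex \<Rightarrow> bool" where
  "singular_point a b c d x y z w \<longleftrightarrow>
     (x, y, z, w) \<noteq> (0, 0, 0, 0) \<and>
     Qform a b c d x y z w = 0 \<and>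
     deriv (\<lambda>t. Qform a b c d t y z w) x = 0 \<and>
     deriv (\<lambda>t. Qform a b c d x t z w) y = 0 \<and>
     deriv (\<lambda>t. Qform a b c d x y t w) z = 0 \<and>
     deriv (\<lambda>t. Qform a b c d x y z t) w = 0"

definition proj_eq :: "complex \<times> complex \<times> complex \<times> complex \<Rightarrow>
    complex \<times> complex \<times> complex \<times> complex \<Rightarrow> bool" where
  "proj_eq p q \<longleftrightarrow> (\<exists>t::complex. t \<noteq> 0 \<and>
     p = (t * fst q, t * fst (snd q), t * fst (snd (snd q)), t * snd (snd (snd q))))"

definition D4 :: "complex \<Rightarrow> complex \<Rightarrow> complex \<Rightarrow> complex \<Rightarrow> complex" where
  "D4 a b c d =
   - (2^5*3^6*a^6*b*c^3) + 2^6*3^6*a^3*b^3*c^3 - 2^5*3^6*b^5*c^3 - 2^4*3^5*a^5*c^4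
   + 2^4*3^5*5^2*a^2*b^2*c^4 + 2*3^3*5^4*a*b*c^5 + 5^5*c^6
   - 2^4*3^7*a^7*c^2*d + 2^5*3^7*a^4*b^2*c^2*d - 2^4*3^7*a*b^4*c^2*d
   + 2^3*3^5*5*19*a^3*b*c^3*d + 2^3*3^5*5^2*b^3*c^3*d + 3^3*5^3*11*a^2*c^4*d
   + 2^3*3^5*37*a^4*c^2*d^2 + 2^3*3^5*5*7*a*b^2*c^2*d^2 - 2^3*3^3*5^3*b*c^3*d^2
   + 2^4*3^6*a^6*d^3 - 2^5*3^6*a^3*b^2*d^3 + 2^4*3^6*b^4*d^3
   - 2^6*3^6*a^2*b*c*d^3 - 2^3*3^5*5^2*a*c^2*d^3
   - 2^5*3^6*a^3*d^4 - 2^5*3^6*b^2*d^4 + 2^4*3^6*d^5"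

end

theory Submission
  imports Defs "HOL-Computational_Algebra.Fundamental_Theorem_Algebra"
begin

lemma dFx: "deriv (\<lambda>t. Qform a b c d t y z w) x = -12*x^2*z + 3*a*z*w^2 + c*z^2*w"
  unfolding Qform_def
  apply (rule DERIV_imp_deriv)
  apply (rule derivative_eq_intros refl | simp)+
  apply ((simp add: field_simps power2_eq_square power3_eq_cube)?)
  done
lemma dFy: "deriv (\<lambda>t. Qform a b c d x t z w) y = 2*y*z*w"
  unfolding Qform_def
  apply (rule DERIV_imp_deriv)
  apply (rule derivative_eq_intros refl | simp)+
  apply ((simp add: field_simps power2_eq_square power3_eq_cube)?)
  done
lemma dFz: "deriv (\<lambda>t. Qform a b c d x y t w) z = y^2*w - 4*x^3 + 3*a*x*w^2 + b*w^3 + 2*c*x*z*w - d*z*w^2"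
  unfolding Qform_def
  apply (rule DERIV_imp_deriv)
  apply (rule derivative_eq_intros refl | simp)+
  apply ((simp add: field_simps power2_eq_square power3_eq_cube)?)
  done
lemma dFw: "deriv (\<lambda>t. Qform a b c d x y z t) w = y^2*z + 6*a*x*z*w + 3*b*z*w^2 + c*x*z^2 - d*z^2*w - 2*w^3"
  unfolding Qform_def
  apply (rule DERIV_imp_deriv)
  apply (rule derivative_eq_intros refl | simp)+
  apply ((simp add: field_simps power2_eq_square power3_eq_cube)?)
  done

lemma cubic_vieta:
  fixes L A B C :: complex
  assumes L: "L \<noteq> 0"
  shows "\<exists>r1 r2 r3. A = - L*(r1+r2+r3) \<and> B = L*(r1*r2+r1*r3+r2*r3) \<and> C = - L*r1*r2*r3"
proof -
  define p where "p = A/L"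
  define q where "q = B/L"
  define r where "r = C/L"
  have "\<exists>z. poly [:r,q,p,1:] z = 0"
    by (rule fundamental_theorem_of_algebra_alt) simp
  then obtain r1 where r1: "r + r1*(q + r1*(p + r1)) = 0" by auto
  define \<beta> where "\<beta> = p + r1"
  define \<gamma> where "\<gamma> = q + r1*\<beta>"
  define s where "s = csqrt (\<beta>^2 - 4*\<gamma>)"
  have s2: "s^2 = \<beta>^2 - 4*\<gamma>" unfolding s_def by simp
  define r2 where "r2 = (-\<beta>+s)/2"
  define r3 where "r3 = (-\<beta>-s)/2"
  have e1: "r2 + r3 = -\<beta>" unfolding r2_def r3_def by (simp add: field_simps)
  have e2: "r2 * r3 = \<gamma>" unfolding r2_def r3_def using s2 by (simp add: field_simps power2_eq_square)
  have "A = - L*(r1+r2+r3)"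
    using e1 L unfolding \<beta>_def p_def by (simp add: field_simps)
  moreover have "B = L*(r1*r2+r1*r3+r2*r3)"
  proof -
    have "r1*r2+r1*r3+r2*r3 = q" using e1 e2 unfolding \<gamma>_def \<beta>_def by algebra
    then show ?thesis using L unfolding q_def by simp
  qed
  moreover have "C = - L*r1*r2*r3"
  proof -
    have "r1*r2*r3 = -r" using e2 r1 unfolding \<gamma>_def \<beta>_def by algebra
    then show ?thesis using L unfolding r_def by (simp add: field_simps)
  qed
  ultimately show ?thesis by blast
qed

lemma gen_res: fixes L A B C E G H r1 r2 r3 :: complex
  assumes "A = - L*(r1+r2+r3)" "B = L*(r1*r2+r1*r3+r2*r3)" "C = - L*r1*r2*r3"
  shows "L^2*H^3 - L*A*G*H^2 - 2*L*B*E*H^2 + L*B*G^2*H + 3*L*C*E*G*H - L*C*G^3 + A^2*E*H^2 - A*B*E*G*H - 2*A*C*E^2*H + A*C*E*G^2 + B^2*E^2*H - B*C*E^2*G + C^2*E^3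
   = L^2 * (E*r1^2+G*r1+H)*(E*r2^2+G*r2+H)*(E*r3^2+G*r3+H)"
  unfolding assms by algebra

lemma cubic_res:
  fixes L A B C E G H :: complex
  assumes L: "L \<noteq> 0"
  shows "(\<exists>x. L*x^3+A*x^2+B*x+C = 0 \<and> E*x^2+G*x+H = 0) \<longleftrightarrow>
    L^2*H^3 - L*A*G*H^2 - 2*L*B*E*H^2 + L*B*G^2*H + 3*L*C*E*G*H - L*C*G^3 + A^2*E*H^2 - A*B*E*G*H - 2*A*C*E^2*H + A*C*E*G^2 + B^2*E^2*H - B*C*E^2*G + C^2*E^3 = 0"
proof -
  obtain r1 r2 r3 where v: "A = - L*(r1+r2+r3)" "B = L*(r1*r2+r1*r3+r2*r3)" "C = - L*r1*r2*r3"
    using cubic_vieta[OF L] by blast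
  have fac: "L*x^3+A*x^2+B*x+C = L*((x-r1)*(x-r2)*(x-r3))" for x
    unfolding v by algebra
  have roots: "L*x^3+A*x^2+B*x+C = 0 \<longleftrightarrow> x = r1 \<or> x = r2 \<or> x = r3" for x
    unfolding fac using L by simp
  show ?thesis
    unfolding gen_res[OF v] using L roots by auto
qed

lemma inst_res: fixes a b c d :: complex
  shows "(20*c)^2*(-765*a^2*c^2*d - 630*a*b*c^3 + 324*a*d^3 + 108*b*c*d^2 - 125*c^4)^3 - (20*c)*(-12*d)*(-360*a^2*c^3 + 216*a*c*d^2 + 180*b*c^2*d)*(-765*a^2*c^2*d - 630*a*b*c^3 + 324*a*d^3 + 108*b*c*d^2 - 125*c^4)^2 - 2*(20*c)*(-3*a*c)*(3420*a*c^2*d + 1800*b*c^3 - 1296*d^3)*(-765*a^2*c^2*d - 630*a*b*c^3 + 324*a*d^3 + 108*b*c*d^2 - 125*c^4)^2 + (20*c)*(-3*a*c)*(-360*a^2*c^3 + 216*a*c*d^2 + 180*b*c^2*d)^2*(-765*a^2*c^2*d - 630*a*b*c^3 + 324*a*d^3 + 108*b*c*d^2 - 125*c^4) + 3*(20*c)*(b*c+3*a*d)*(3420*a*c^2*d + 1800*b*c^3 - 1296*d^3)*(-360*a^2*c^3 + 216*a*c*d^2 + 180*b*c^2*d)*(-765*a^2*c^2*d - 630*a*b*c^3 + 324*a*d^3 + 108*b*c*d^2 - 125*c^4) - (20*c)*(b*c+3*a*d)*(-360*a^2*c^3 + 216*a*c*d^2 + 180*b*c^2*d)^3 + (-12*d)^2*(3420*a*c^2*d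 + 1800*b*c^3 - 1296*d^3)*(-765*a^2*c^2*d - 630*a*b*c^3 + 324*a*d^3 + 108*b*c*d^2 - 125*c^4)^2 - (-12*d)*(-3*a*c)*(3420*a*c^2*d + 1800*b*c^3 - 1296*d^3)*(-360*a^2*c^3 + 216*a*c*d^2 + 180*b*c^2*d)*(-765*a^2*c^2*d - 630*a*b*c^3 + 324*a*d^3 + 108*b*c*d^2 - 125*c^4) - 2*(-12*d)*(b*c+3*a*d)*(3420*a*c^2*d + 1800*b*c^3 - 1296*d^3)^2*(-765*a^2*c^2*d - 630*a*b*c^3 + 324*a*d^3 + 108*b*c*d^2 - 125*c^4) + (-12*d)*(b*c+3*a*d)*(3420*a*c^2*d + 1800*b*c^3 - 1296*d^3)*(-360*a^2*c^3 + 216*a*c*d^2 + 180*b*c^2*d)^2 + (-3*a*c)^2*(3420*a*c^2*d + 1800*b*c^3 - 1296*d^3)^2*(-765*a^2*c^2*d - 630*a*b*c^3 + 324*a*d^3 + 108*b*c*d^2 - 125*c^4) - (-3*a*c)*(b*c+3*a*d)*(3420*a*c^2*d + 1800*b*c^3 - 1296*d^3)^2*(-360*a^2*c^3 + 216*a*c*d^2 + 180*b*c^2*d) + (b*c+3*a*d)^2*(3420*a*c^2*d + 1800*b*c^3 - 1296*d^3)^3 = -250000 * c^8 * D4 a b c d"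
  unfolding D4_def by algebra

lemma pdiv: fixes a b c d x :: complex
  shows "(20*c)^3 * (144*x^5*c - 144*x^4*d + 72*x^2*a*d + 36*x^2*b*c - 9*x*a^2*c - 9*a^2*d - 9*a*b*c - 2*c^2)
    = (57600*c^3*x^2 - 23040*c^2*d*x + 8640*a*c^3 - 13824*c*d^2) * (20*c*x^3 - 12*d*x^2 - 3*a*c*x + (b*c+3*a*d))
      + 128*c*((3420*a*c^2*d + 1800*b*c^3 - 1296*d^3)*x^2 + (-360*a^2*c^3 + 216*a*c*d^2 + 180*b*c^2*d)*x + (-765*a^2*c^2*d - 630*a*b*c^3 + 324*a*d^3 + 108*b*c*d^2 - 125*c^4))"
  by algebra

definition E1 where "E1 a b c d x z = -12*x^2 + 3*a + c*z"
definition E2 where "E2 a b c d x z = -4*x^3 + 3*a*x + b + 2*c*x*z - d*z"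
definition E3 where "E3 a b c d x z = 6*a*x*z + 3*b*z + c*x*z^2 - d*z^2 - 2"

lemma case_c:
  fixes a b c d :: complex
  assumes c: "c \<noteq> 0"
  shows "(\<exists>x z. E1 a b c d x z = 0 \<and> E2 a b c d x z = 0 \<and> E3 a b c d x z = 0) \<longleftrightarrow> D4 a b c d = 0"
proof -
  define Pc where "Pc x = 20*c*x^3 + (-12*d)*x^2 + (-3*a*c)*x + (b*c+3*a*d)" for x
  define Qc where "Qc x = 144*x^5*c - 144*x^4*d + 72*x^2*a*d + 36*x^2*b*c - 9*x*a^2*c - 9*a^2*d - 9*a*b*c - 2*c^2" for x
  define Rc where "Rc x = (3420*a*c^2*d + 1800*b*c^3 - 1296*d^3)*x^2 + (-360*a^2*c^3 + 216*a*c*d^2 + 180*b*c^2*d)*x + (-765*a^2*c^2*d - 630*a*b*c^3 + 324*a*d^3 + 108*b*c*d^2 - 125*c^4)" for x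
  have pd: "(20*c)^3 * Qc x = (57600*c^3*x^2 - 23040*c^2*d*x + 8640*a*c^3 - 13824*c*d^2) * Pc x + 128*c*Rc x" for x
    unfolding Pc_def Qc_def Rc_def by algebra
  have step1: "(\<exists>x z. E1 a b c d x z = 0 \<and> E2 a b c d x z = 0 \<and> E3 a b c d x z = 0) \<longleftrightarrow> (\<exists>x. Pc x = 0 \<and> Rc x = 0)"
  proof
    assume "\<exists>x z. E1 a b c d x z = 0 \<and> E2 a b c d x z = 0 \<and> E3 a b c d x z = 0"
    then obtain x z where h: "E1 a b c d x z = 0" "E2 a b c d x z = 0" "E3 a b c d x z = 0" by blast
    have p: "Pc x = 0" using h unfolding Pc_def E1_def E2_def E3_def by algebra
    have q: "Qc x = 0" using h unfolding Qc_def E1_def E2_def E3_def by algebra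
    have "128*c*Rc x = 0" using pd[of x] p q by simp
    then show "\<exists>x. Pc x = 0 \<and> Rc x = 0" using p c by auto
  next
    assume "\<exists>x. Pc x = 0 \<and> Rc x = 0"
    then obtain x where h: "Pc x = 0" "Rc x = 0" by blast
    have q: "Qc x = 0" using pd[of x] h c by simp
    obtain z where z: "c*z = 12*x^2 - 3*a" using c by (metis mult.commute nonzero_eq_divide_eq)
    have e1: "E1 a b c d x z = 0" using z unfolding E1_def by simp
    have "c * E2 a b c d x z = 0" using z h(1) unfolding Pc_def E2_def by algebra
    then have e2: "E2 a b c d x z = 0" using c by simp
    have "c^2 * E3 a b c d x z = 0" using z q unfolding Qc_def E3_def by algebra
    then have e3: "E3 a b c d x z = 0" using c by simp
    show "\<exists>x z. E1 a b c d x z = 0 \<and> E2 a b c d x z = 0 \<and> E3 a b c d x z = 0" using e1 e2 e3 by blast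
  qed
  have step2: "(\<exists>x. Pc x = 0 \<and> Rc x = 0) \<longleftrightarrow> -250000 * c^8 * D4 a b c d = 0"
  proof -
    have "20*c \<noteq> 0" using c by simp
    note cr = cubic_res[OF this, of "-12*d" "-3*a*c" "b*c+3*a*d" "3420*a*c^2*d + 1800*b*c^3 - 1296*d^3"
       "-360*a^2*c^3 + 216*a*c*d^2 + 180*b*c^2*d" "-765*a^2*c^2*d - 630*a*b*c^3 + 324*a*d^3 + 108*b*c*d^2 - 125*c^4"]
    show ?thesis unfolding Pc_def Rc_def cr[unfolded inst_res] ..
  qed
  show ?thesis unfolding step1 step2 using c by simp
qed

lemma case_d:
  fixes a b c d :: complex
  assumes c: "c = 0" and d: "d \<noteq> 0"
  shows "(\<exists>x z. E1 a b c d x z = 0 \<and> E2 a b c d x z = 0 \<and> E3 a b c d x z = 0) \<longleftrightarrow> D4 a b c d = 0"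
proof -
  have D: "D4 a b c d = 2^4*3^6*d^3 * ((d - a^3 - b^2)^2 - 4*a^3*b^2)"
    unfolding D4_def c by simp algebra
  have "(\<exists>x z. E1 a b c d x z = 0 \<and> E2 a b c d x z = 0 \<and> E3 a b c d x z = 0) \<longleftrightarrow>
        (\<exists>x. 4*x^2 = a \<and> 4*a*b*x = d - a^3 - b^2)"
  proof
    assume "\<exists>x z. E1 a b c d x z = 0 \<and> E2 a b c d x z = 0 \<and> E3 a b c d x z = 0"
    then obtain x z where h: "E1 a b c d x z = 0" "E2 a b c d x z = 0" "E3 a b c d x z = 0" by blast
    have 1: "4*x^2 = a" using h(1) unfolding E1_def c by simp
    have z: "d*z = 2*a*x + b" using h(2) 1 unfolding E2_def c by algebra
    have "d * (4*a*b*x - (d - a^3 - b^2)) = 0" using h(3) z 1 unfolding E3_def c by algebra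
    then show "\<exists>x. 4*x^2 = a \<and> 4*a*b*x = d - a^3 - b^2" using 1 d by auto
  next
    assume "\<exists>x. 4*x^2 = a \<and> 4*a*b*x = d - a^3 - b^2"
    then obtain x where h: "4*x^2 = a" "4*a*b*x = d - a^3 - b^2" by blast
    obtain z where z: "d*z = 2*a*x + b" using d by (metis mult.commute nonzero_eq_divide_eq)
    have e1: "E1 a b c d x z = 0" using h unfolding E1_def c by simp
    have "4*x^3 = (4*x^2)*x" by (simp add: power3_eq_cube power2_eq_square)
    then have ax: "4*x^3 = a*x" using h(1) by simp
    have e2: "E2 a b c d x z = 0" using ax z unfolding E2_def c by (simp add: algebra_simps)
    have "d * E3 a b c d x z = (d*z)*(6*a*x+3*b) - (d*z)^2 - 2*d"
      using c unfolding E3_def by (simp add: algebra_simps power2_eq_square)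
    also have "\<dots> = (2*a*x + b)*(6*a*x+3*b) - (2*a*x + b)^2 - 2*d" by (simp only: z)
    also have "\<dots> = 2*(a^2*(4*x^2) + 4*a*b*x + b^2) - 2*d" by algebra
    also have "\<dots> = 0" unfolding h by algebra
    finally have "d * E3 a b c d x z = 0" .
    then have e3: "E3 a b c d x z = 0" using d by simp
    show "\<exists>x z. E1 a b c d x z = 0 \<and> E2 a b c d x z = 0 \<and> E3 a b c d x z = 0" using e1 e2 e3 by blast
  qed
  also have "\<dots> \<longleftrightarrow> (d - a^3 - b^2)^2 - 4*a^3*b^2 = 0"
  proof
    assume "\<exists>x. 4*x^2 = a \<and> 4*a*b*x = d - a^3 - b^2"
    then obtain x where h: "4*x^2 = a" "4*a*b*x = d - a^3 - b^2" by blast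
    have "(d - a^3 - b^2)^2 = (4*a*b*x)^2" using h(2) by simp
    also have "\<dots> = 4*a^2*b^2*(4*x^2)" by algebra
    also have "\<dots> = 4*a^3*b^2" unfolding h(1) by algebra
    finally show "(d - a^3 - b^2)^2 - 4*a^3*b^2 = 0" by simp
  next
    assume k: "(d - a^3 - b^2)^2 - 4*a^3*b^2 = 0"
    obtain x where x: "4*x^2 = a"
    proof
      show "4*(csqrt a / 2)^2 = a" by (simp add: power_divide)
    qed
    show "\<exists>x. 4*x^2 = a \<and> 4*a*b*x = d - a^3 - b^2"
    proof (cases "a*b = 0")
      case True
      then have "d - a^3 - b^2 = 0" using k by (auto simp: power2_eq_square)
      then show ?thesis using x True by auto
    next
      case False
      define x' where "x' = (d - a^3 - b^2)/(4*a*b)"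
      have 2: "4*a*b*x' = d - a^3 - b^2" using False unfolding x'_def by simp
      have "(4*a*b)^2 * (4*x'^2 - a) = 0" using 2 k by algebra
      then have "4*x'^2 = a" using False by simp
      then show ?thesis using 2 by blast
    qed
  qed
  finally show ?thesis unfolding D using d by simp
qed

lemma sing_iff:
  fixes a b c d x y z w :: complex
  shows "singular_point a b c d x y z w \<longleftrightarrow> (x, y, z, w) \<noteq> (0, 0, 0, 0) \<and>
     Qform a b c d x y z w = 0 \<and>
     -12*x^2*z + 3*a*z*w^2 + c*z^2*w = 0 \<and> 2*y*z*w = 0 \<and>
     y^2*w - 4*x^3 + 3*a*x*w^2 + b*w^3 + 2*c*x*z*w - d*z*w^2 = 0 \<and>
     y^2*z + 6*a*x*z*w + 3*b*z*w^2 + c*x*z^2 - d*z^2*w - 2*w^3 = 0"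
  unfolding singular_point_def dFx dFy dFz dFw by simp

lemma reduce:
  fixes a b c d :: complex
  shows "(\<exists>x y z w. singular_point a b c d x y z w \<and>
            \<not> proj_eq (x, y, z, w) (0, 1, 0, 0) \<and>
            \<not> proj_eq (x, y, z, w) (0, 0, 1, 0))
    \<longleftrightarrow> (\<exists>x z. E1 a b c d x z = 0 \<and> E2 a b c d x z = 0 \<and> E3 a b c d x z = 0)"
proof
  assume "\<exists>x y z w. singular_point a b c d x y z w \<and>
            \<not> proj_eq (x, y, z, w) (0, 1, 0, 0) \<and>
            \<not> proj_eq (x, y, z, w) (0, 0, 1, 0)"
  then obtain x y z w where s: "singular_point a b c d x y z w"
    and n1: "\<not> proj_eq (x, y, z, w) (0, 1, 0, 0)" and n2: "\<not> proj_eq (x, y, z, w) (0, 0, 1, 0)"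
    by blast
  note h = s[unfolded sing_iff]
  have f1: "-12*x^2*z + 3*a*z*w^2 + c*z^2*w = 0"
   and f2: "y^2*w - 4*x^3 + 3*a*x*w^2 + b*w^3 + 2*c*x*z*w - d*z*w^2 = 0"
   and f3: "y^2*z + 6*a*x*z*w + 3*b*z*w^2 + c*x*z^2 - d*z^2*w - 2*w^3 = 0"
    using h by simp_all
  have w: "w \<noteq> 0"
  proof
    assume w0: "w = 0"
    have "x = 0" using h w0 by simp
    then have "y^2*z = 0" using h w0 by simp
    then have "y = 0 \<or> z = 0" by simp
    then show False
    proof
      assume "y = 0"
      then have "proj_eq (x, y, z, w) (0, 0, 1, 0)" using \<open>x = 0\<close> w0 h
        unfolding proj_eq_def by auto
      then show False using n2 by simp
    next
      assume "z = 0"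
      then have "proj_eq (x, y, z, w) (0, 1, 0, 0)" using \<open>x = 0\<close> w0 h
        unfolding proj_eq_def by auto
      then show False using n1 by simp
    qed
  qed
  have z: "z \<noteq> 0"
  proof
    assume "z = 0"
    then have "w^3 = 0" using h by simp
    then show False using w by simp
  qed
  have y: "y = 0" using h z w by simp
  define X where "X = x/w"
  define Z where "Z = z/w"
  have xX: "x = X*w" and zZ: "z = Z*w" using w unfolding X_def Z_def by simp_all
  have "z * (w^2 * E1 a b c d X Z) = 0" using f1 unfolding E1_def xX zZ by algebra
  then have 1: "E1 a b c d X Z = 0" using w z by simp
  have "w^3 * E2 a b c d X Z = 0" using f2 y unfolding E2_def xX zZ by algebra
  then have 2: "E2 a b c d X Z = 0" using w by simp
  have "w^3 * E3 a b c d X Z = 0" using f3 y unfolding E3_def xX zZ by algebra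
  then have 3: "E3 a b c d X Z = 0" using w by simp
  show "\<exists>x z. E1 a b c d x z = 0 \<and> E2 a b c d x z = 0 \<and> E3 a b c d x z = 0" using 1 2 3 by blast
next
  assume "\<exists>x z. E1 a b c d x z = 0 \<and> E2 a b c d x z = 0 \<and> E3 a b c d x z = 0"
  then obtain x z where h: "E1 a b c d x z = 0" "E2 a b c d x z = 0" "E3 a b c d x z = 0" by blast
  have "singular_point a b c d x 0 z 1"
    unfolding sing_iff using h unfolding E1_def E2_def E3_def Qform_def
    by (simp add: field_simps) algebra
  moreover have "\<not> proj_eq (x, 0, z, 1) (0, 1, 0, 0)" "\<not> proj_eq (x, 0, z, 1) (0, 0, 1, 0)"
    unfolding proj_eq_def by auto
  ultimately show "\<exists>x y z w. singular_point a b c d x y z w \<and>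
            \<not> proj_eq (x, y, z, w) (0, 1, 0, 0) \<and>
            \<not> proj_eq (x, y, z, w) (0, 0, 1, 0)" by blast
qed

theorem mainTheorem4:
  fixes a b c d :: complex
  assumes "c \<noteq> 0 \<or> d \<noteq> 0"
  shows "(\<exists>x y z w. singular_point a b c d x y z w \<and>
            \<not> proj_eq (x, y, z, w) (0, 1, 0, 0) \<and>
            \<not> proj_eq (x, y, z, w) (0, 0, 1, 0))
         \<longleftrightarrow> D4 a b c d = 0"
  unfolding reduce using assms case_c case_d by blast

end
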